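(* Let $m,n\ge 1$, $A=[a_{ij}]$ an $m\times n$ matrix with entries in $\mathbb{R}\cup\{-\infty\}$, and $B=[b_{ji}]$ an $n\times m$ matrix with entries in $\mathbb{R}\cup\{+\infty\}$. Let $\lambda\in\mathbb{R}$ be an eigenvalue of the bipartite min-max-plus system $\mathcal{M}$ defined by $A,B$, let $A_\lambda=-\lambda\otimes A$, $B_\lambda=-\lambda\otimes B$, and define a sequence $y(l+1)=\mathcal{N}(y(l))$ from an initial state vector $y(0)$. Suppose $y(r)=y(s)$ for some integers $r>s\ge 0$ and let $v=y(s)\oplus y(s+1)\oplus\cdots\oplus y(r-1)$. If the iteration is restarted with $x^*(0)=v$ and $x^*(l+1)=\mathcal{N}(x^*(l))$, then $x^*(l+1)\ge x^*(l)$ (componentwise) for all $l=0,1,2,\dots$.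
   Context: Notation: $\epsilon=-\infty$, $\tau=+\infty$. For scalars, $r\oplus s=\max\{r,s\}$, $r\oplus' s=\min\{r,s\}$, $r\otimes s=r+s$; $\oplus$ of vectors is the componentwise maximum. For a scalar $\alpha\in\mathbb{R}$ and a matrix or vector $X$, $\alpha\otimes X$ adds $\alpha$ to every entry (infinite entries are unchanged). Max-plus product: $(A\otimes w)_i=\max_{1\le j\le n}(a_{ij}+w_j)$; min-plus product: $(B\otimes' u)_j=\min_{1\le i\le m}(b_{ji}+u_i)$. Convention for infinite sums: $-\infty+x=-\infty$ for $x\ne+\infty$, $+\infty+x=+\infty$ for $x\ne-\infty$, and in max-plus products $-\infty$ is absorbing while in min-plus products $+\infty$ is absorbing. For $v=\begin{pmatrix}u\\ w\end{pmatrix}$ ($u$ of length $m$, $w$ of length $n$): $\mathcal{M}(v)=\begin{pmatrix}A\otimes w\\ B\otimes' u\end{pmatrix}$ and $\mathcal{N}(v)=\begin{pmatrix}A_\lambda\otimes w\\ B_\lambda\otimes' u\end{pmatrix}$. A real number $\lambda$ is an eigenvalue of the system $x(l+1)=\mathcal{M}(x(l))$ if there exists $v\in\mathbb{R}^{m+n}$ with $\mathcal{M}(v)=\lambda\otimes v$. *)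

theory Defs
  imports "HOL-Library.Extended_Real"
begin

text \<open>Vectors of length m+n are functions nat => ereal; indices 0..m-1 hold u,
  indices m..m+n-1 hold w (entry w_j is at index m+j). Matrices are
  A :: nat => nat => ereal (A i j, i<m, j<n) and B :: nat => nat => ereal (B j i, j<n, i<m).\<close>

definition mp_times :: "ereal \<Rightarrow> ereal \<Rightarrow> ereal" where
  "mp_times a x = (if a = -\<infinity> \<or> x = -\<infinity> then -\<infinity> else a + x)"

definition minp_times :: "ereal \<Rightarrow> ereal \<Rightarrow> ereal" where
  "minp_times b x = (if b = \<infinity> \<or> x = \<infinity> then \<infinity> else b + x)"

definition bmap :: "nat \<Rightarrow> nat \<Rightarrow> (nat \<Rightarrow> nat \<Rightarrow> ereal) \<Rightarrow> (nat \<Rightarrow> nat \<Rightarrow> ereal)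
    \<Rightarrow> (nat \<Rightarrow> ereal) \<Rightarrow> (nat \<Rightarrow> ereal)" where
  "bmap m n A B v = (\<lambda>k.
     if k < m then Max ((\<lambda>j. mp_times (A k j) (v (m + j))) ` {..<n})
     else if k < m + n then Min ((\<lambda>i. minp_times (B (k - m) i) (v i)) ` {..<m})
     else 0)"

definition scal_mat :: "real \<Rightarrow> (nat \<Rightarrow> nat \<Rightarrow> ereal) \<Rightarrow> (nat \<Rightarrow> nat \<Rightarrow> ereal)" where
  "scal_mat \<alpha> X = (\<lambda>i j. X i j + ereal \<alpha>)"

definition is_eigenvalue :: "nat \<Rightarrow> nat \<Rightarrow> (nat \<Rightarrow> nat \<Rightarrow> ereal) \<Rightarrow> (nat \<Rightarrow> nat \<Rightarrow> ereal)
    \<Rightarrow> real \<Rightarrow> bool" where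
  "is_eigenvalue m n A B lam \<longleftrightarrow>
     (\<exists>v :: nat \<Rightarrow> real. \<forall>k < m + n. bmap m n A B (\<lambda>k. ereal (v k)) k = ereal (lam + v k))"

end

theory Submission
  imports Defs
begin

lemma mp_mono: "x \<le> y \<Longrightarrow> mp_times a x \<le> mp_times a y"
  unfolding mp_times_def
  by (cases a; cases x; cases y) auto

lemma minp_mono: "x \<le> y \<Longrightarrow> minp_times a x \<le> minp_times a y"
  unfolding minp_times_def
  by (cases a; cases x; cases y) auto

lemma bmap_mono:
  assumes "m \<ge> 1" "n \<ge> 1" "\<forall>k<m+n. u k \<le> v k" "k < m + n"
  shows "bmap m n A B u k \<le> bmap m n A B v k"
proof (cases "k < m")
  case True
  have ne: "{..<n} \<noteq> {}" using assms by (auto simp: lessThan_empty_iff)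
  have "Max ((\<lambda>j. mp_times (A k j) (u (m + j))) ` {..<n})
      \<le> Max ((\<lambda>j. mp_times (A k j) (v (m + j))) ` {..<n})"
  proof (rule Max.boundedI)
    show "finite ((\<lambda>j. mp_times (A k j) (u (m + j))) ` {..<n})" by simp
    show "(\<lambda>j. mp_times (A k j) (u (m + j))) ` {..<n} \<noteq> {}" using ne by simp
    fix a assume "a \<in> (\<lambda>j. mp_times (A k j) (u (m + j))) ` {..<n}"
    then obtain j where j: "j < n" and a: "a = mp_times (A k j) (u (m + j))" by auto
    have "mp_times (A k j) (u (m + j)) \<le> mp_times (A k j) (v (m + j))"
      using assms(3) j by (intro mp_mono) auto
    also have "\<dots> \<le> Max ((\<lambda>j. mp_times (A k j) (v (m + j))) ` {..<n})"
      using j by (intro Max_ge) auto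
    finally show "a \<le> Max ((\<lambda>j. mp_times (A k j) (v (m + j))) ` {..<n})" using a by simp
  qed
  then show ?thesis using True by (simp add: bmap_def)
next
  case False
  have ne: "{..<m} \<noteq> {}" using assms by (auto simp: lessThan_empty_iff)
  have "Min ((\<lambda>i. minp_times (B (k - m) i) (u i)) ` {..<m})
      \<le> Min ((\<lambda>i. minp_times (B (k - m) i) (v i)) ` {..<m})"
  proof (rule Min.boundedI)
    show "finite ((\<lambda>i. minp_times (B (k - m) i) (v i)) ` {..<m})" by simp
    show "(\<lambda>i. minp_times (B (k - m) i) (v i)) ` {..<m} \<noteq> {}" using ne by simp
    fix a assume "a \<in> (\<lambda>i. minp_times (B (k - m) i) (v i)) ` {..<m}"
    then obtain j where j: "j < m" and a: "a = minp_times (B (k - m) j) (v j)" by auto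
    have "Min ((\<lambda>i. minp_times (B (k - m) i) (u i)) ` {..<m}) \<le> minp_times (B (k - m) j) (u j)"
      using j by (intro Min_le) auto
    also have "\<dots> \<le> minp_times (B (k - m) j) (v j)"
      using assms(3) j by (intro minp_mono) auto
    finally show "Min ((\<lambda>i. minp_times (B (k - m) i) (u i)) ` {..<m}) \<le> a" using a by simp
  qed
  then show ?thesis using False assms(4) by (simp add: bmap_def)
qed

theorem lemma1:
  fixes m n :: nat and A B :: "nat \<Rightarrow> nat \<Rightarrow> ereal" and lam :: real
    and y0 :: "nat \<Rightarrow> real" and y xs :: "nat \<Rightarrow> nat \<Rightarrow> ereal" and r s :: nat
  assumes "m \<ge> 1" and "n \<ge> 1"
    and "\<forall>i<m. \<forall>j<n. A i j \<noteq> \<infinity>"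
    and "\<forall>j<n. \<forall>i<m. B j i \<noteq> -\<infinity>"
    and "is_eigenvalue m n A B lam"
    and "y 0 = (\<lambda>k. ereal (y0 k))"
    and "\<forall>l. y (Suc l) = bmap m n (scal_mat (-lam) A) (scal_mat (-lam) B) (y l)"
    and "s < r"
    and "\<forall>k<m+n. y r k = y s k"
    and "xs 0 = (\<lambda>k. Max ((\<lambda>l. y l k) ` {s..<r}))"
    and "\<forall>l. xs (Suc l) = bmap m n (scal_mat (-lam) A) (scal_mat (-lam) B) (xs l)"
  shows "\<forall>l. \<forall>k<m+n. xs (Suc l) k \<ge> xs l k"
proof -
  let ?N = "bmap m n (scal_mat (-lam) A) (scal_mat (-lam) B)"
  have ylev: "\<forall>k<m+n. y l k \<le> xs 0 k" if "l \<in> {s..<r}" for l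
    using that assms(10) by (auto intro: Max_ge)
  have base: "\<forall>k<m+n. xs 0 k \<le> xs 1 k"
  proof (intro allI impI)
    fix k assume k: "k < m + n"
    have "xs 0 k \<in> (\<lambda>l. y l k) ` {s..<r}"
      unfolding assms(10) using assms(8) by (intro Max_in) auto
    then obtain l0 where l0: "l0 \<in> {s..<r}" "xs 0 k = y l0 k" by auto
    obtain p where p: "p \<in> {s..<r}" "y l0 k = y (Suc p) k"
    proof (cases "l0 = s")
      case True
      have "r - 1 \<in> {s..<r}" "Suc (r - 1) = r" using assms(8) by auto
      then show ?thesis using that[of "r - 1"] assms(9) k l0 True by simp
    next
      case False
      have "l0 - 1 \<in> {s..<r}" "Suc (l0 - 1) = l0" using False l0(1) by auto
      then show ?thesis using that[of "l0 - 1"] by simp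
    qed
    have "y (Suc p) k = ?N (y p) k" using assms(7) by simp
    also have "\<dots> \<le> ?N (xs 0) k"
      using bmap_mono[OF assms(1,2) ylev[OF p(1)] k] .
    also have "\<dots> = xs 1 k" using assms(11) by simp
    finally show "xs 0 k \<le> xs 1 k" using l0 p by simp
  qed
  have "\<forall>k<m+n. xs l k \<le> xs (Suc l) k" for l
  proof (induction l)
    case 0 then show ?case using base by simp
  next
    case (Suc l)
    then show ?case using assms(11) bmap_mono[OF assms(1,2) Suc] by simp
  qed
  then show ?thesis by simp
qed

end
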